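(* Let $M_1,\dots,M_k$ be terms in normal form and let $C$ be a $k$-hole $E$-context. If $\Gamma,\downarrow C[M_1,\dots,M_k]\vdash M$ has a cut-free derivation in $\mathcal S$, then so does $\Gamma,M_1,\dots,M_k\vdash M$.
   Context: Fix names, variables and constructors $\mathsf{pub}$ (unary), $\mathsf{sign},\mathsf{blind},\langle\cdot,\cdot\rangle,\{\cdot\}_\cdot$ (binary). $E$ is the union of AC-convergent equational theories $E_1,\dots,E_n$ with pairwise disjoint signatures, disjoint from the constructors, each with at most one associative-commutative (AC) binary symbol $\oplus_i$; $E$ is presented by a rewrite system $R_E$ terminating and confluent modulo AC; $\Sigma_E$ is its signature. Terms are ground terms over names, the constructors and $\Sigma_E$; $\downarrow N$ is the $R_E$-normal form of $N$ modulo AC. $\equiv$ is equality modulo AC of all $\oplus_i$; $\approx_E$ equality modulo $E$. Guarded term: a name, a variable, or headed by a constructor. $E$-context: term with holes built only from symbols of $\Sigma_E$; $C[M_1,\dots,M_k]$ places $M_i$ in the $i$-th hole. Sequents $\Gamma\vdash M$ have all terms in normal form; $\Gamma,M$ means $\Gamma\cup\{M\}$. A derivation is cut-free if it has no instance of (cut). System $\mathcal S$: (id) $\Gamma\vdash M$ with no premise if $M\approx_E C[M_1,\dots,M_k]$ for an $E$-context $C$ and $M_i\in\Gamma$; (cut) from $\Gamma\vdash M$, $\Gamma,M\vdash T$ infer $\Gamma\vdash T$; ($p_L$) from $\Gamma,\langle M,N\rangle,M,N\vdash T$ infer $\Gamma,\langle M,N\rangle\vdash T$; ($p_R$) from $\Gamma\vdash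 M,\Gamma\vdash N$ infer $\Gamma\vdash\langle M,N\rangle$; ($e_L$) from $\Gamma,\{M\}_K\vdash K$ and $\Gamma,\{M\}_K,M,K\vdash N$ infer $\Gamma,\{M\}_K\vdash N$; ($e_R$) from $\Gamma\vdash M,\Gamma\vdash K$ infer $\Gamma\vdash\{M\}_K$; ($\mathsf{sign}_L$) from $\Gamma,\mathsf{sign}(M,K),\mathsf{pub}(L),M\vdash N$ infer $\Gamma,\mathsf{sign}(M,K),\mathsf{pub}(L)\vdash N$ if $K\equiv L$; ($\mathsf{sign}_R$) from $\Gamma\vdash M,\Gamma\vdash K$ infer $\Gamma\vdash\mathsf{sign}(M,K)$; ($\mathsf{blind}_{L1}$) from $\Gamma,\mathsf{blind}(M,K)\vdash K$ and $\Gamma,\mathsf{blind}(M,K),M,K\vdash N$ infer $\Gamma,\mathsf{blind}(M,K)\vdash N$; ($\mathsf{blind}_R$) from $\Gamma\vdash M,\Gamma\vdash K$ infer $\Gamma\vdash\mathsf{blind}(M,K)$; ($\mathsf{blind}_{L2}$) from $\Gamma,\mathsf{sign}(\mathsf{blind}(M,R),K)\vdash R$ and $\Gamma,\mathsf{sign}(\mathsf{blind}(M,R),K),\mathsf{sign}(M,K),R\vdash N$ infer $\Gamma,\mathsf{sign}(\mathsf{blind}(M,R),K)\vdash N$; ($gs$) from $\Gamma\vdash A$, $\Gamma,A\vdash M$ infer $\Gamma\vdash M$ if $A$ is a guarded subterm of a term in $\Gamma\cup\{M\}$. *)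

theory Defs
  imports Main
begin

text \<open>Names 'n, symbols of the signature Sigma_E of type 'f.  Var is used only for
  variables of rewrite rules and for holes of E-contexts; the terms of sequents are
  ground (contain no Var).  Enc m k stands for the encryption {m}_k,
  Pair for the pairing constructor, Fn f ts for f(ts) with f in Sigma_E.\<close>

datatype ('n, 'f) trm =
    Nm 'n
  | Var nat
  | Pub "('n, 'f) trm"
  | Sign "('n, 'f) trm" "('n, 'f) trm"
  | Blind "('n, 'f) trm" "('n, 'f) trm"
  | Pair "('n, 'f) trm" "('n, 'f) trm"
  | Enc "('n, 'f) trm" "('n, 'f) trm"
  | Fn 'f "('n, 'f) trm list"

fun vars :: "('n, 'f) trm \<Rightarrow> nat set" where
  "vars (Nm a) = {}"
| "vars (Var x) = {x}"
| "vars (Pub t) = vars t"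
| "vars (Sign s t) = vars s \<union> vars t"
| "vars (Blind s t) = vars s \<union> vars t"
| "vars (Pair s t) = vars s \<union> vars t"
| "vars (Enc s t) = vars s \<union> vars t"
| "vars (Fn f ts) = (\<Union>t\<in>set ts. vars t)"

fun syms :: "('n, 'f) trm \<Rightarrow> 'f set" where
  "syms (Nm a) = {}"
| "syms (Var x) = {}"
| "syms (Pub t) = syms t"
| "syms (Sign s t) = syms s \<union> syms t"
| "syms (Blind s t) = syms s \<union> syms t"
| "syms (Pair s t) = syms s \<union> syms t"
| "syms (Enc s t) = syms s \<union> syms t"
| "syms (Fn f ts) = insert f (\<Union>t\<in>set ts. syms t)"

fun holes :: "('n, 'f) trm \<Rightarrow> nat list" where
  "holes (Nm a) = []"
| "holes (Var x) = [x]"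
| "holes (Pub t) = holes t"
| "holes (Sign s t) = holes s @ holes t"
| "holes (Blind s t) = holes s @ holes t"
| "holes (Pair s t) = holes s @ holes t"
| "holes (Enc s t) = holes s @ holes t"
| "holes (Fn f ts) = concat (map holes ts)"

definition ground :: "('n, 'f) trm \<Rightarrow> bool" where
  "ground t \<longleftrightarrow> vars t = {}"

fun is_eterm :: "('n, 'f) trm \<Rightarrow> bool" where
  "is_eterm (Var x) = True"
| "is_eterm (Fn f ts) = (\<forall>t\<in>set ts. is_eterm t)"
| "is_eterm _ = False"

fun wf_trm :: "('f \<Rightarrow> nat) \<Rightarrow> ('n, 'f) trm \<Rightarrow> bool" where
  "wf_trm ar (Nm a) = True"
| "wf_trm ar (Var x) = True"
| "wf_trm ar (Pub t) = wf_trm ar t"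
| "wf_trm ar (Sign s t) = (wf_trm ar s \<and> wf_trm ar t)"
| "wf_trm ar (Blind s t) = (wf_trm ar s \<and> wf_trm ar t)"
| "wf_trm ar (Pair s t) = (wf_trm ar s \<and> wf_trm ar t)"
| "wf_trm ar (Enc s t) = (wf_trm ar s \<and> wf_trm ar t)"
| "wf_trm ar (Fn f ts) = (length ts = ar f \<and> (\<forall>t\<in>set ts. wf_trm ar t))"

fun subst :: "(nat \<Rightarrow> ('n, 'f) trm) \<Rightarrow> ('n, 'f) trm \<Rightarrow> ('n, 'f) trm" where
  "subst \<sigma> (Nm a) = Nm a"
| "subst \<sigma> (Var x) = \<sigma> x"
| "subst \<sigma> (Pub t) = Pub (subst \<sigma> t)"
| "subst \<sigma> (Sign s t) = Sign (subst \<sigma> s) (subst \<sigma> t)"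
| "subst \<sigma> (Blind s t) = Blind (subst \<sigma> s) (subst \<sigma> t)"
| "subst \<sigma> (Pair s t) = Pair (subst \<sigma> s) (subst \<sigma> t)"
| "subst \<sigma> (Enc s t) = Enc (subst \<sigma> s) (subst \<sigma> t)"
| "subst \<sigma> (Fn f ts) = Fn f (map (subst \<sigma>) ts)"

fun subterms :: "('n, 'f) trm \<Rightarrow> ('n, 'f) trm set" where
  "subterms (Nm a) = {Nm a}"
| "subterms (Var x) = {Var x}"
| "subterms (Pub t) = insert (Pub t) (subterms t)"
| "subterms (Sign s t) = insert (Sign s t) (subterms s \<union> subterms t)"
| "subterms (Blind s t) = insert (Blind s t) (subterms s \<union> subterms t)"
| "subterms (Pair s t) = insert (Pair s t) (subterms s \<union> subterms t)"
| "subterms (Enc s t) = insert (Enc s t) (subterms s \<union> subterms t)"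
| "subterms (Fn f ts) = insert (Fn f ts) (\<Union>t\<in>set ts. subterms t)"

fun guarded :: "('n, 'f) trm \<Rightarrow> bool" where
  "guarded (Fn f ts) = False"
| "guarded _ = True"

inductive ac_eq :: "'f set \<Rightarrow> ('n, 'f) trm \<Rightarrow> ('n, 'f) trm \<Rightarrow> bool" for A where
  ac_refl: "ac_eq A t t"
| ac_sym: "ac_eq A s t \<Longrightarrow> ac_eq A t s"
| ac_trans: "ac_eq A s t \<Longrightarrow> ac_eq A t u \<Longrightarrow> ac_eq A s u"
| ac_assoc: "f \<in> A \<Longrightarrow> ac_eq A (Fn f [Fn f [a, b], c]) (Fn f [a, Fn f [b, c]])"
| ac_comm: "f \<in> A \<Longrightarrow> ac_eq A (Fn f [a, b]) (Fn f [b, a])"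
| ac_Pub: "ac_eq A s t \<Longrightarrow> ac_eq A (Pub s) (Pub t)"
| ac_Sign1: "ac_eq A s t \<Longrightarrow> ac_eq A (Sign s u) (Sign t u)"
| ac_Sign2: "ac_eq A s t \<Longrightarrow> ac_eq A (Sign u s) (Sign u t)"
| ac_Blind1: "ac_eq A s t \<Longrightarrow> ac_eq A (Blind s u) (Blind t u)"
| ac_Blind2: "ac_eq A s t \<Longrightarrow> ac_eq A (Blind u s) (Blind u t)"
| ac_Pair1: "ac_eq A s t \<Longrightarrow> ac_eq A (Pair s u) (Pair t u)"
| ac_Pair2: "ac_eq A s t \<Longrightarrow> ac_eq A (Pair u s) (Pair u t)"
| ac_Enc1: "ac_eq A s t \<Longrightarrow> ac_eq A (Enc s u) (Enc t u)"
| ac_Enc2: "ac_eq A s t \<Longrightarrow> ac_eq A (Enc u s) (Enc u t)"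
| ac_Fn: "ac_eq A s t \<Longrightarrow> ac_eq A (Fn f (xs @ s # ys)) (Fn f (xs @ t # ys))"

type_synonym ('n, 'f) rule = "('n, 'f) trm \<times> ('n, 'f) trm"

inductive rstep :: "('n, 'f) rule set \<Rightarrow> ('n, 'f) trm \<Rightarrow> ('n, 'f) trm \<Rightarrow> bool" for R where
  rs_root: "(l, r) \<in> R \<Longrightarrow> rstep R (subst \<sigma> l) (subst \<sigma> r)"
| rs_Pub: "rstep R s t \<Longrightarrow> rstep R (Pub s) (Pub t)"
| rs_Sign1: "rstep R s t \<Longrightarrow> rstep R (Sign s u) (Sign t u)"
| rs_Sign2: "rstep R s t \<Longrightarrow> rstep R (Sign u s) (Sign u t)"
| rs_Blind1: "rstep R s t \<Longrightarrow> rstep R (Blind s u) (Blind t u)"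
| rs_Blind2: "rstep R s t \<Longrightarrow> rstep R (Blind u s) (Blind u t)"
| rs_Pair1: "rstep R s t \<Longrightarrow> rstep R (Pair s u) (Pair t u)"
| rs_Pair2: "rstep R s t \<Longrightarrow> rstep R (Pair u s) (Pair u t)"
| rs_Enc1: "rstep R s t \<Longrightarrow> rstep R (Enc s u) (Enc t u)"
| rs_Enc2: "rstep R s t \<Longrightarrow> rstep R (Enc u s) (Enc u t)"
| rs_Fn: "rstep R s t \<Longrightarrow> rstep R (Fn f (xs @ s # ys)) (Fn f (xs @ t # ys))"

definition rstep_ac :: "'f set \<Rightarrow> ('n, 'f) rule set \<Rightarrow> ('n, 'f) trm \<Rightarrow> ('n, 'f) trm \<Rightarrow> bool" where
  "rstep_ac A R s t \<longleftrightarrow> (\<exists>s' t'. ac_eq A s s' \<and> rstep R s' t' \<and> ac_eq A t' t)"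

definition conv_ac :: "'f set \<Rightarrow> ('n, 'f) rule set \<Rightarrow> ('n, 'f) trm \<Rightarrow> ('n, 'f) trm \<Rightarrow> bool" where
  "conv_ac A R = (\<lambda>s t. rstep_ac A R s t \<or> rstep_ac A R t s \<or> ac_eq A s t)\<^sup>*\<^sup>*"

definition terminating_ac :: "('f \<Rightarrow> nat) \<Rightarrow> 'f set \<Rightarrow> ('n, 'f) rule set \<Rightarrow> bool" where
  "terminating_ac ar A R \<longleftrightarrow>
     \<not> (\<exists>g :: nat \<Rightarrow> ('n, 'f) trm. \<forall>i. ground (g i) \<and> wf_trm ar (g i) \<and> rstep_ac A R (g i) (g (Suc i)))"

definition confluent_ac :: "('f \<Rightarrow> nat) \<Rightarrow> 'f set \<Rightarrow> ('n, 'f) rule set \<Rightarrow> bool" where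
  "confluent_ac ar A R \<longleftrightarrow>
     (\<forall>s t. ground s \<and> wf_trm ar s \<and> ground t \<and> wf_trm ar t \<and> conv_ac A R s t \<longrightarrow>
        (\<exists>u v. (rstep_ac A R)\<^sup>*\<^sup>* s u \<and> (rstep_ac A R)\<^sup>*\<^sup>* t v \<and> ac_eq A u v))"

text \<open>E = E_0 \<union> ... \<union> E_(nthy-1): thy f is the index of the theory whose signature contains f
  (so the signatures are pairwise disjoint); ACs is the set of AC symbols; rules is R_E,
  and the rules of E_i are those whose symbols all lie in the signature of E_i.\<close>
record ('n, 'f) eqthy =
  ACs :: "'f set"
  arity :: "'f \<Rightarrow> nat"
  thy :: "'f \<Rightarrow> nat"
  nthy :: nat
  rules :: "('n, 'f) rule set"

definition rules_of :: "('n, 'f) eqthy \<Rightarrow> nat \<Rightarrow> ('n, 'f) rule set" where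
  "rules_of T i = {(l, r) \<in> rules T. \<forall>f \<in> syms l \<union> syms r. thy T f = i}"

definition E_ok :: "('n, 'f) eqthy \<Rightarrow> bool" where
  "E_ok T \<longleftrightarrow>
     (\<forall>f. thy T f < nthy T) \<and>
     (\<forall>f \<in> ACs T. arity T f = 2) \<and>
     (\<forall>f \<in> ACs T. \<forall>g \<in> ACs T. thy T f = thy T g \<longrightarrow> f = g) \<and>
     (\<forall>(l, r) \<in> rules T. is_eterm l \<and> is_eterm r \<and> wf_trm (arity T) l \<and> wf_trm (arity T) r \<and>
         (\<forall>x. l \<noteq> Var x) \<and> vars r \<subseteq> vars l \<and>
         (\<exists>i. \<forall>f \<in> syms l \<union> syms r. thy T f = i)) \<and>
     (\<forall>i < nthy T. terminating_ac (arity T) (ACs T) (rules_of T i) \<and>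
                    confluent_ac (arity T) (ACs T) (rules_of T i)) \<and>
     terminating_ac (arity T) (ACs T) (rules T) \<and> confluent_ac (arity T) (ACs T) (rules T)"

definition eqE :: "('n, 'f) eqthy \<Rightarrow> ('n, 'f) trm \<Rightarrow> ('n, 'f) trm \<Rightarrow> bool" where
  "eqE T = conv_ac (ACs T) (rules T)"

definition acE :: "('n, 'f) eqthy \<Rightarrow> ('n, 'f) trm \<Rightarrow> ('n, 'f) trm \<Rightarrow> bool" where
  "acE T = ac_eq (ACs T)"

definition is_nf :: "('n, 'f) eqthy \<Rightarrow> ('n, 'f) trm \<Rightarrow> bool" where
  "is_nf T t \<longleftrightarrow> \<not> (\<exists>u. rstep_ac (ACs T) (rules T) t u)"

text \<open>N is (a representative of) the normal form \<down>t.\<close>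
definition is_nf_of :: "('n, 'f) eqthy \<Rightarrow> ('n, 'f) trm \<Rightarrow> ('n, 'f) trm \<Rightarrow> bool" where
  "is_nf_of T t N \<longleftrightarrow> (rstep_ac (ACs T) (rules T))\<^sup>*\<^sup>* t N \<and> is_nf T N"

text \<open>A term of the sequent calculus: ground, arity-respecting, in normal form.\<close>
definition nterm :: "('n, 'f) eqthy \<Rightarrow> ('n, 'f) trm \<Rightarrow> bool" where
  "nterm T t \<longleftrightarrow> ground t \<and> wf_trm (arity T) t \<and> is_nf T t"

definition nseq :: "('n, 'f) eqthy \<Rightarrow> ('n, 'f) trm set \<Rightarrow> ('n, 'f) trm \<Rightarrow> bool" where
  "nseq T \<Gamma> M \<longleftrightarrow> (\<forall>N \<in> insert M \<Gamma>. nterm T N)"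

definition ectx :: "('n, 'f) eqthy \<Rightarrow> nat \<Rightarrow> ('n, 'f) trm \<Rightarrow> bool" where
  "ectx T k C \<longleftrightarrow> is_eterm C \<and> wf_trm (arity T) C \<and> holes C = [0..<k]"

text \<open>C[M_1,...,M_k] (with Ms = [M_1,...,M_k]).\<close>
definition plug :: "('n, 'f) trm \<Rightarrow> ('n, 'f) trm list \<Rightarrow> ('n, 'f) trm" where
  "plug C Ms = subst (\<lambda>i. Ms ! i) C"

section \<open>Cut-free derivability in system S (all rules except cut)\<close>

inductive cfree :: "('n, 'f) eqthy \<Rightarrow> ('n, 'f) trm set \<Rightarrow> ('n, 'f) trm \<Rightarrow> bool" for T where
  r_id: "\<lbrakk> nseq T \<Gamma> M; ectx T k C; length Ms = k; set Ms \<subseteq> \<Gamma>; eqE T M (plug C Ms) \<rbrakk>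
     \<Longrightarrow> cfree T \<Gamma> M"
| r_pL: "\<lbrakk> nseq T (insert (Pair M N) \<Gamma>) U;
          cfree T (insert (Pair M N) \<Gamma> \<union> {M, N}) U \<rbrakk>
     \<Longrightarrow> cfree T (insert (Pair M N) \<Gamma>) U"
| r_pR: "\<lbrakk> nseq T \<Gamma> (Pair M N); cfree T \<Gamma> M; cfree T \<Gamma> N \<rbrakk> \<Longrightarrow> cfree T \<Gamma> (Pair M N)"
| r_eL: "\<lbrakk> nseq T (insert (Enc M K) \<Gamma>) N;
          cfree T (insert (Enc M K) \<Gamma>) K;
          cfree T (insert (Enc M K) \<Gamma> \<union> {M, K}) N \<rbrakk>
     \<Longrightarrow> cfree T (insert (Enc M K) \<Gamma>) N"
| r_eR: "\<lbrakk> nseq T \<Gamma> (Enc M K); cfree T \<Gamma> M; cfree T \<Gamma> K \<rbrakk> \<Longrightarrow> cfree T \<Gamma> (Enc M K)"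
| r_signL: "\<lbrakk> nseq T (\<Gamma> \<union> {Sign M K, Pub L}) N; acE T K L;
          cfree T (\<Gamma> \<union> {Sign M K, Pub L, M}) N \<rbrakk>
     \<Longrightarrow> cfree T (\<Gamma> \<union> {Sign M K, Pub L}) N"
| r_signR: "\<lbrakk> nseq T \<Gamma> (Sign M K); cfree T \<Gamma> M; cfree T \<Gamma> K \<rbrakk> \<Longrightarrow> cfree T \<Gamma> (Sign M K)"
| r_blindL1: "\<lbrakk> nseq T (insert (Blind M K) \<Gamma>) N;
          cfree T (insert (Blind M K) \<Gamma>) K;
          cfree T (insert (Blind M K) \<Gamma> \<union> {M, K}) N \<rbrakk>
     \<Longrightarrow> cfree T (insert (Blind M K) \<Gamma>) N"
| r_blindR: "\<lbrakk> nseq T \<Gamma> (Blind M K); cfree T \<Gamma> M; cfree T \<Gamma> K \<rbrakk> \<Longrightarrow> cfree T \<Gamma> (Blind M K)"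
| r_blindL2: "\<lbrakk> nseq T (insert (Sign (Blind M R) K) \<Gamma>) N;
          cfree T (insert (Sign (Blind M R) K) \<Gamma>) R;
          cfree T (insert (Sign (Blind M R) K) \<Gamma> \<union> {Sign M K, R}) N \<rbrakk>
     \<Longrightarrow> cfree T (insert (Sign (Blind M R) K) \<Gamma>) N"
| r_gs: "\<lbrakk> nseq T \<Gamma> M; guarded A; A \<in> (\<Union>N \<in> insert M \<Gamma>. subterms N);
          cfree T \<Gamma> A; cfree T (insert A \<Gamma>) M \<rbrakk>
     \<Longrightarrow> cfree T \<Gamma> M"

end

theory Submission
  imports Defs "HOL-Library.Nat_Bijection"
begin

lemma ac_guarded: "ac_eq A s t \<Longrightarrow> guarded s = guarded t"
  by (induction rule: ac_eq.induct) auto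

fun hd_rel :: "'f set \<Rightarrow> ('n,'f) trm \<Rightarrow> ('n,'f) trm \<Rightarrow> bool" where
  "hd_rel A (Nm a) t = (t = Nm a)"
| "hd_rel A (Var x) t = (t = Var x)"
| "hd_rel A (Pub a) t = (\<exists>a'. t = Pub a' \<and> ac_eq A a a')"
| "hd_rel A (Sign a b) t = (\<exists>a' b'. t = Sign a' b' \<and> ac_eq A a a' \<and> ac_eq A b b')"
| "hd_rel A (Blind a b) t = (\<exists>a' b'. t = Blind a' b' \<and> ac_eq A a a' \<and> ac_eq A b b')"
| "hd_rel A (Pair a b) t = (\<exists>a' b'. t = Pair a' b' \<and> ac_eq A a a' \<and> ac_eq A b b')"
| "hd_rel A (Enc a b) t = (\<exists>a' b'. t = Enc a' b' \<and> ac_eq A a a' \<and> ac_eq A b b')"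
| "hd_rel A (Fn f ts) t = (\<exists>g us. t = Fn g us)"

lemma hd_rel_refl: "hd_rel A t t"
  by (cases t) (auto intro: ac_refl)

lemma hd_rel_sym: "hd_rel A s t \<Longrightarrow> hd_rel A t s"
  by (cases s) (auto intro: ac_sym)

lemma hd_rel_trans: "hd_rel A s t \<Longrightarrow> hd_rel A t u \<Longrightarrow> hd_rel A s u"
  by (cases s) (auto, (blast intro: ac_eq.ac_trans)+)

lemma ac_hd: "ac_eq A s t \<Longrightarrow> hd_rel A s t"
proof (induction rule: ac_eq.induct)
  case (ac_refl t) then show ?case by (rule hd_rel_refl)
next
  case (ac_sym s t) then show ?case by (blast intro: hd_rel_sym)
next
  case (ac_trans s t u) then show ?case by (blast intro: hd_rel_trans)
qed (auto intro: ac_eq.ac_refl)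

lemma ac_Pair_D: "ac_eq A (Pair a b) t \<Longrightarrow> \<exists>a' b'. t = Pair a' b' \<and> ac_eq A a a' \<and> ac_eq A b b'"
  using ac_hd by fastforce
lemma ac_Enc_D: "ac_eq A (Enc a b) t \<Longrightarrow> \<exists>a' b'. t = Enc a' b' \<and> ac_eq A a a' \<and> ac_eq A b b'"
  using ac_hd by fastforce
lemma ac_Sign_D: "ac_eq A (Sign a b) t \<Longrightarrow> \<exists>a' b'. t = Sign a' b' \<and> ac_eq A a a' \<and> ac_eq A b b'"
  using ac_hd by fastforce
lemma ac_Blind_D: "ac_eq A (Blind a b) t \<Longrightarrow> \<exists>a' b'. t = Blind a' b' \<and> ac_eq A a a' \<and> ac_eq A b b'"
  using ac_hd by fastforce
lemma ac_Pub_D: "ac_eq A (Pub a) t \<Longrightarrow> \<exists>a'. t = Pub a' \<and> ac_eq A a a'"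
  using ac_hd by fastforce

lemma ac_vars: "ac_eq A s t \<Longrightarrow> vars s = vars t"
  by (induction rule: ac_eq.induct) auto

lemma ac_wf: "ac_eq A s t \<Longrightarrow> \<forall>f\<in>A. ar f = 2 \<Longrightarrow> wf_trm ar s = wf_trm ar t"
  by (induction rule: ac_eq.induct) auto

lemma subterms_refl: "t \<in> subterms t"
  by (cases t) auto

lemma subterms_trans: "a \<in> subterms b \<Longrightarrow> b \<in> subterms c \<Longrightarrow> a \<in> subterms c"
  by (induction c arbitrary: b) (auto simp: subterms_refl)

lemma ac_subterms: "ac_eq A s t \<Longrightarrow>
   (\<forall>a\<in>subterms s. guarded a \<longrightarrow> (\<exists>b\<in>subterms t. ac_eq A a b)) \<and>
   (\<forall>b\<in>subterms t. guarded b \<longrightarrow> (\<exists>a\<in>subterms s. ac_eq A b a))"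
proof (induction rule: ac_eq.induct)
  case (ac_refl t) then show ?case by (auto intro: ac_eq.ac_refl)
next
  case (ac_sym s t) then show ?case by auto
next
  case (ac_trans s t u)
  show ?case
  proof (intro conjI ballI impI)
    fix a assume "a \<in> subterms s" "guarded a"
    then obtain b where "b \<in> subterms t" "ac_eq A a b" using ac_trans.IH by blast
    moreover have "guarded b" using \<open>guarded a\<close> ac_guarded[OF \<open>ac_eq A a b\<close>] by simp
    ultimately show "\<exists>b\<in>subterms u. ac_eq A a b" using ac_trans.IH by (meson ac_eq.ac_trans)
  next
    fix a assume "a \<in> subterms u" "guarded a"
    then obtain b where "b \<in> subterms t" "ac_eq A a b" using ac_trans.IH by blast
    moreover have "guarded b" using \<open>guarded a\<close> ac_guarded[OF \<open>ac_eq A a b\<close>] by simp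
    ultimately show "\<exists>b\<in>subterms s. ac_eq A a b" using ac_trans.IH by (meson ac_eq.ac_trans)
  qed
next
  case (ac_Fn s t f xs ys)
  then show ?case by (auto intro: ac_eq.ac_refl)
qed (auto intro: ac_eq.ac_refl ac_eq.ac_Pub ac_eq.ac_Sign1 ac_eq.ac_Sign2 ac_eq.ac_Blind1 ac_eq.ac_Blind2
   ac_eq.ac_Pair1 ac_eq.ac_Pair2 ac_eq.ac_Enc1 ac_eq.ac_Enc2 ac_eq.ac_sym)

lemma rstep_ac_Fn: "rstep_ac A R s t \<Longrightarrow> rstep_ac A R (Fn f (xs @ s # ys)) (Fn f (xs @ t # ys))"
  unfolding rstep_ac_def by (blast intro: ac_eq.ac_Fn rstep.rs_Fn)

lemma conv_ac_Fn: "conv_ac A R s t \<Longrightarrow> conv_ac A R (Fn f (xs @ s # ys)) (Fn f (xs @ t # ys))"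
  unfolding conv_ac_def
proof (induction rule: rtranclp_induct)
  case base then show ?case by simp
next
  case (step y z)
  from step(2) have "rstep_ac A R (Fn f (xs @ y # ys)) (Fn f (xs @ z # ys)) \<or> rstep_ac A R (Fn f (xs @ z # ys)) (Fn f (xs @ y # ys))
     \<or> ac_eq A (Fn f (xs @ y # ys)) (Fn f (xs @ z # ys))"
    by (auto intro: rstep_ac_Fn ac_eq.ac_Fn)
  then show ?case using step(3) by (simp add: rtranclp.rtrancl_into_rtrancl)
qed

lemma conv_ac_refl: "conv_ac A R s s"
  unfolding conv_ac_def by simp

lemma conv_ac_trans: "conv_ac A R s t \<Longrightarrow> conv_ac A R t u \<Longrightarrow> conv_ac A R s u"
  unfolding conv_ac_def by (rule rtranclp_trans)

lemma conv_ac_sym: "conv_ac A R s t \<Longrightarrow> conv_ac A R t s"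
  unfolding conv_ac_def
proof (induction rule: rtranclp_induct)
  case base then show ?case by simp
next
  case (step y z)
  have "(\<lambda>s t. rstep_ac A R s t \<or> rstep_ac A R t s \<or> ac_eq A s t) z y"
    using step(2) by (auto intro: ac_eq.ac_sym)
  then show ?case using step(3) by (rule converse_rtranclp_into_rtranclp)
qed

lemma conv_ac_ac: "ac_eq A s t \<Longrightarrow> conv_ac A R s t"
  unfolding conv_ac_def by auto

lemma conv_ac_rsteps: "(rstep_ac A R)\<^sup>*\<^sup>* s t \<Longrightarrow> conv_ac A R s t"
  unfolding conv_ac_def using mono_rtranclp[of "rstep_ac A R" "\<lambda>s t. rstep_ac A R s t \<or> rstep_ac A R t s \<or> ac_eq A s t"] by blast

lemma conv_ac_list: "length ts = length us \<Longrightarrow> (\<forall>i<length ts. conv_ac A R (ts!i) (us!i)) \<Longrightarrow>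
   conv_ac A R (Fn f (xs @ ts)) (Fn f (xs @ us))"
proof (induction ts arbitrary: us xs)
  case Nil then show ?case by (simp add: conv_ac_refl)
next
  case (Cons t ts)
  then obtain u us' where us: "us = u # us'" by (cases us) auto
  have 1: "conv_ac A R (Fn f (xs @ t # ts)) (Fn f (xs @ u # ts))"
    using Cons.prems(2)[rule_format, of 0] us by (auto intro: conv_ac_Fn)
  have "conv_ac A R (Fn f ((xs @ [u]) @ ts)) (Fn f ((xs @ [u]) @ us'))"
    using Cons.prems us by (intro Cons.IH) auto
  then show ?case using 1 us by (auto intro: conv_ac_trans)
qed

lemma conv_ac_subst: "is_eterm C \<Longrightarrow> (\<forall>x\<in>vars C. conv_ac A R (\<sigma> x) (\<tau> x)) \<Longrightarrow>
   conv_ac A R (subst \<sigma> C) (subst \<tau> C)"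
proof (induction C)
  case (Fn f ts)
  have "conv_ac A R (Fn f ([] @ map (subst \<sigma>) ts)) (Fn f ([] @ map (subst \<tau>) ts))"
    using Fn by (intro conv_ac_list) auto
  then show ?case by simp
qed auto

lemma subst_subst: "subst \<sigma> (subst \<tau> C) = subst (\<lambda>x. subst \<sigma> (\<tau> x)) C"
  by (induction C) auto

lemma vars_subst: "vars (subst \<sigma> C) = (\<Union>x\<in>vars C. vars (\<sigma> x))"
  by (induction C) auto

lemma eterm_subst: "is_eterm C \<Longrightarrow> (\<forall>x\<in>vars C. is_eterm (\<sigma> x)) \<Longrightarrow> is_eterm (subst \<sigma> C)"
  by (induction C) auto

lemma wf_subst: "wf_trm ar C \<Longrightarrow> (\<forall>x\<in>vars C. wf_trm ar (\<sigma> x)) \<Longrightarrow> wf_trm ar (subst \<sigma> C)"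
  by (induction C) auto

lemma set_holes: "set (holes t) = vars t"
  by (induction t) auto

lemma subst_cong: "(\<forall>x\<in>vars C. \<sigma> x = \<tau> x) \<Longrightarrow> subst \<sigma> C = subst \<tau> C"
  by (induction C) auto

fun lin :: "nat \<Rightarrow> ('n,'f) trm \<Rightarrow> ('n,'f) trm" and linl :: "nat \<Rightarrow> ('n,'f) trm list \<Rightarrow> ('n,'f) trm list" where
  "lin n (Var x) = Var n"
| "lin n (Fn f ts) = Fn f (linl n ts)"
| "lin n t = t"
| "linl n [] = []"
| "linl n (t # ts) = lin n t # linl (n + length (holes t)) ts"

lemma linl_length: "length (linl n ts) = length ts"
  by (induction ts arbitrary: n) auto

lemma lin_holes:
  fixes t :: "('n,'f) trm" and ts :: "('n,'f) trm list"
  shows "is_eterm t \<Longrightarrow> holes (lin n t) = [n..<n + length (holes t)]"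
    and "\<forall>t\<in>set ts. is_eterm t \<Longrightarrow> concat (map holes (linl n ts)) = [n..<n + length (concat (map holes ts))]"
proof (induction n t and n ts rule: lin_linl.induct)
  case (5 n t ts)
  then have a: "holes (lin n t) = [n..<n + length (holes t)]"
    and b: "concat (map holes (linl (n + length (holes t)) ts)) = [n + length (holes t)..<n + length (holes t) + length (concat (map holes ts))]"
    by auto
  have "[n..<n + length (holes t)] @ [n + length (holes t)..<n + length (holes t) + length (concat (map holes ts))]
     = [n..<n + length (holes t) + length (concat (map holes ts))]"
    by (rule upt_add_eq_append[symmetric]) simp
  then show ?case using a b by (simp add: add.assoc)
qed simp_all

lemma lin_eterm:
  fixes t :: "('n,'f) trm" and ts :: "('n,'f) trm list"
  shows "is_eterm t \<Longrightarrow> is_eterm (lin n t)"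
    and "\<forall>t\<in>set ts. is_eterm t \<Longrightarrow> \<forall>t\<in>set (linl n ts). is_eterm t"
  by (induction n t and n ts rule: lin_linl.induct) simp_all

lemma lin_wf:
  fixes t :: "('n,'f) trm" and ts :: "('n,'f) trm list"
  shows "wf_trm ar t \<Longrightarrow> wf_trm ar (lin n t)"
    and "\<forall>t\<in>set ts. wf_trm ar t \<Longrightarrow> \<forall>t\<in>set (linl n ts). wf_trm ar t"
  by (induction n t and n ts rule: lin_linl.induct) (simp_all add: linl_length)

lemma lin_subst:
  fixes t :: "('n,'f) trm" and ts :: "('n,'f) trm list"
  shows "is_eterm t \<Longrightarrow> (\<And>j. j < length (holes t) \<Longrightarrow> \<rho> (n + j) = \<sigma> (holes t ! j)) \<Longrightarrow> subst \<rho> (lin n t) = subst \<sigma> t"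
    and "\<forall>t\<in>set ts. is_eterm t \<Longrightarrow> (\<And>j. j < length (concat (map holes ts)) \<Longrightarrow> \<rho> (n + j) = \<sigma> (concat (map holes ts) ! j)) \<Longrightarrow>
         map (subst \<rho>) (linl n ts) = map (subst \<sigma>) ts"
proof (induction n t and n ts rule: lin_linl.induct)
  case (1 n x)
  then show ?case using 1(2)[of 0] by simp
next
  case (2 n f ts)
  then show ?case by simp
next
  case (5 n t ts)
  have et: "is_eterm t" and ets: "\<forall>t\<in>set ts. is_eterm t" using 5(3) by auto
  have "subst \<rho> (lin n t) = subst \<sigma> t"
  proof (rule 5(1)[OF et])
    fix j assume "j < length (holes t)"
    then show "\<rho> (n + j) = \<sigma> (holes t ! j)" using 5(4)[of j] by (simp add: nth_append)
  qed
  moreover have "map (subst \<rho>) (linl (n + length (holes t)) ts) = map (subst \<sigma>) ts"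
  proof (rule 5(2)[OF ets])
    fix j assume "j < length (concat (map holes ts))"
    then show "\<rho> (n + length (holes t) + j) = \<sigma> (concat (map holes ts) ! j)"
      using 5(4)[of "length (holes t) + j"] by (simp add: nth_append add.assoc)
  qed
  ultimately show ?case by simp
qed simp_all

lemma lin_props:
  "is_eterm t \<Longrightarrow> holes (lin n t) = [n..<n + length (holes t)] \<and> is_eterm (lin n t) \<and>
     (wf_trm ar t \<longrightarrow> wf_trm ar (lin n t)) \<and>
     (\<forall>\<rho> \<sigma>. (\<forall>j<length (holes t). \<rho> (n + j) = \<sigma> (holes t ! j)) \<longrightarrow> subst \<rho> (lin n t) = subst \<sigma> t)"
  using lin_holes(1) lin_eterm(1) lin_wf(1) lin_subst(1) by blast

fun aliens :: "('n,'f) trm \<Rightarrow> ('n,'f) trm set" where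
  "aliens (Fn f ts) = (\<Union>t\<in>set ts. aliens t)"
| "aliens t = {t}"

lemma aliens_subterms: "a \<in> aliens t \<Longrightarrow> a \<in> subterms t"
  by (induction t rule: aliens.induct) (auto simp: subterms_refl)

lemma guarded_sub_alien: "A \<in> subterms t \<Longrightarrow> guarded A \<Longrightarrow> \<exists>a\<in>aliens t. A \<in> subterms a"
  by (induction t; fastforce)

lemma aliens_subst_eterm: "is_eterm C \<Longrightarrow> aliens (subst \<sigma> C) = (\<Union>x\<in>vars C. aliens (\<sigma> x))"
  by (induction C) auto

lemma ac_aliens: "ac_eq A s t \<Longrightarrow>
  (\<forall>a\<in>aliens s. \<exists>b\<in>aliens t. ac_eq A a b) \<and> (\<forall>b\<in>aliens t. \<exists>a\<in>aliens s. ac_eq A b a)"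
proof (induction rule: ac_eq.induct)
  case (ac_refl t) then show ?case by (auto intro: ac_eq.ac_refl)
next
  case (ac_sym s t) then show ?case by auto
next
  case (ac_trans s t u) then show ?case by (meson ac_eq.ac_trans)
next
  case (ac_Fn s t f xs ys)
  then show ?case by (auto intro: ac_eq.ac_refl)
qed (auto intro: ac_eq.ac_refl ac_eq.ac_Pub ac_eq.ac_Sign1 ac_eq.ac_Sign2 ac_eq.ac_Blind1 ac_eq.ac_Blind2
   ac_eq.ac_Pair1 ac_eq.ac_Pair2 ac_eq.ac_Enc1 ac_eq.ac_Enc2 ac_eq.ac_sym)

lemma alien_nf: "a \<in> aliens s \<Longrightarrow> rstep_ac A R a u \<Longrightarrow> \<exists>v. rstep_ac A R s v"
proof (induction s arbitrary: a)
  case (Fn f ts)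
  then obtain t where t: "t \<in> set ts" "a \<in> aliens t" by auto
  with Fn obtain v where "rstep_ac A R t v" by blast
  moreover obtain xs ys where "ts = xs @ t # ys" using t(1) by (meson split_list)
  ultimately show ?case using rstep_ac_Fn by metis
qed auto

lemma rstep_aliens:
  assumes "rstep R s t"
    and "\<forall>(l, r)\<in>R. is_eterm l \<and> is_eterm r \<and> vars r \<subseteq> vars l"
    and "\<forall>a\<in>aliens s. \<not> (\<exists>u. rstep_ac A R a u)"
  shows "aliens t \<subseteq> aliens s"
  using assms
proof (induction rule: rstep.induct)
  case (rs_root l r \<sigma>)
  then have "is_eterm l" "is_eterm r" "vars r \<subseteq> vars l" by auto
  then show ?case by (auto simp: aliens_subst_eterm)
next
  case (rs_Fn s t f xs ys)
  then show ?case by auto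
qed (simp add: rstep_ac_def; metis ac_eq.ac_refl rstep.intros)+

lemma nf_ac: "ac_eq A a b \<Longrightarrow> \<not> (\<exists>u. rstep_ac A R b u) \<Longrightarrow> \<not> (\<exists>u. rstep_ac A R a u)"
  unfolding rstep_ac_def by (meson ac_eq.ac_sym ac_eq.ac_trans)

lemma alien_invariant:
  assumes rules: "\<forall>(l, r)\<in>R. is_eterm l \<and> is_eterm r \<and> vars r \<subseteq> vars l"
    and Gnf: "\<forall>b\<in>G. \<not> (\<exists>u. rstep_ac A R b u)"
    and steps: "(rstep_ac A R)\<^sup>*\<^sup>* s t"
    and init: "\<forall>a\<in>aliens s. \<exists>b\<in>G. ac_eq A a b"
  shows "\<forall>a\<in>aliens t. \<exists>b\<in>G. ac_eq A a b"
  using steps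
proof (induction rule: rtranclp_induct)
  case base then show ?case using init .
next
  case (step y z)
  then obtain y' z' where y': "ac_eq A y y'" "rstep R y' z'" "ac_eq A z' z"
    unfolding rstep_ac_def by blast
  have inv_y': "\<forall>a\<in>aliens y'. \<exists>b\<in>G. ac_eq A a b"
  proof
    fix a assume "a \<in> aliens y'"
    then obtain a0 where "a0 \<in> aliens y" "ac_eq A a a0" using ac_aliens[OF y'(1)] by blast
    then show "\<exists>b\<in>G. ac_eq A a b" using step.IH by (meson ac_eq.ac_trans)
  qed
  have "\<forall>a\<in>aliens y'. \<not> (\<exists>u. rstep_ac A R a u)"
    using inv_y' Gnf nf_ac by metis
  then have "aliens z' \<subseteq> aliens y'" using rstep_aliens[OF y'(2) rules] by blast
  then have inv_z': "\<forall>a\<in>aliens z'. \<exists>b\<in>G. ac_eq A a b" using inv_y' by blast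
  show ?case
  proof
    fix a assume "a \<in> aliens z"
    then obtain a0 where "a0 \<in> aliens z'" "ac_eq A a a0" using ac_aliens[OF y'(3)] by blast
    then show "\<exists>b\<in>G. ac_eq A a b" using inv_z' by (meson ac_eq.ac_trans)
  qed
qed

definition idd :: "('n,'f) eqthy \<Rightarrow> ('n,'f) trm set \<Rightarrow> ('n,'f) trm \<Rightarrow> bool" where
  "idd T \<Gamma> M \<longleftrightarrow> (\<exists>C \<sigma>. is_eterm C \<and> wf_trm (arity T) C \<and> (\<forall>x\<in>vars C. \<sigma> x \<in> \<Gamma>) \<and> eqE T M (subst \<sigma> C))"

lemma idd_mem: "D \<in> \<Gamma> \<Longrightarrow> idd T \<Gamma> D"
  unfolding idd_def eqE_def
  by (rule exI[of _ "Var 0"], rule exI[of _ "\<lambda>_. D"]) (simp add: conv_ac_refl)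

lemma idd_ac: "acE T D D' \<Longrightarrow> idd T \<Gamma> D' \<Longrightarrow> idd T \<Gamma> D"
  unfolding idd_def eqE_def acE_def by (meson conv_ac_ac conv_ac_trans)

lemma idd_mono: "\<Gamma> \<subseteq> \<Gamma>' \<Longrightarrow> idd T \<Gamma> M \<Longrightarrow> idd T \<Gamma>' M"
  unfolding idd_def by blast

lemma idd_comp:
  assumes C: "is_eterm C" "wf_trm (arity T) C" and eq: "eqE T M (subst \<sigma> C)"
    and sub: "\<forall>x\<in>vars C. idd T \<Gamma> (\<sigma> x)"
  shows "idd T \<Gamma> M"
proof -
  have "\<forall>x\<in>vars C. \<exists>p. is_eterm (fst p) \<and> wf_trm (arity T) (fst p) \<and> (\<forall>y\<in>vars (fst p). snd p y \<in> \<Gamma>)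
      \<and> eqE T (\<sigma> x) (subst (snd p) (fst p))"
    using sub unfolding idd_def by fastforce
  then obtain P where P: "\<forall>x\<in>vars C. is_eterm (fst (P x)) \<and> wf_trm (arity T) (fst (P x)) \<and> (\<forall>y\<in>vars (fst (P x)). snd (P x) y \<in> \<Gamma>)
      \<and> eqE T (\<sigma> x) (subst (snd (P x)) (fst (P x)))"
    using bchoice by metis
  define D where "D x = subst (\<lambda>y. Var (prod_encode (x, y))) (fst (P x))" for x
  define \<rho> where "\<rho> n = (case prod_decode n of (x, y) \<Rightarrow> snd (P x) y)" for n
  have sD: "subst \<rho> (D x) = subst (snd (P x)) (fst (P x))" for x
    unfolding D_def subst_subst by (simp add: \<rho>_def prod_encode_inverse)
  have "subst \<rho> (subst D C) = subst (\<lambda>x. subst (snd (P x)) (fst (P x))) C"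
    by (simp add: subst_subst sD)
  moreover have "eqE T (subst \<sigma> C) (subst (\<lambda>x. subst (snd (P x)) (fst (P x))) C)"
    unfolding eqE_def using P C by (intro conv_ac_subst) (auto simp: eqE_def)
  ultimately have e: "eqE T M (subst \<rho> (subst D C))"
    using eq unfolding eqE_def by (metis conv_ac_trans)
  have et: "is_eterm (subst D C)"
    using C P by (intro eterm_subst) (auto simp: D_def intro!: eterm_subst)
  have wt: "wf_trm (arity T) (subst D C)"
    using C P by (intro wf_subst) (auto simp: D_def intro!: wf_subst)
  have vt: "\<forall>z\<in>vars (subst D C). \<rho> z \<in> \<Gamma>"
    using P by (auto simp: vars_subst D_def \<rho>_def prod_encode_inverse)
  show ?thesis unfolding idd_def using et wt vt e by blast
qed

lemma idd_cfree: "nseq T \<Gamma> M \<Longrightarrow> idd T \<Gamma> M \<Longrightarrow> cfree T \<Gamma> M"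
proof -
  assume ns: "nseq T \<Gamma> M" and "idd T \<Gamma> M"
  then obtain C \<sigma> where C: "is_eterm C" "wf_trm (arity T) C" "\<forall>x\<in>vars C. \<sigma> x \<in> \<Gamma>" "eqE T M (subst \<sigma> C)"
    unfolding idd_def by blast
  define Ms where "Ms = map \<sigma> (holes C)"
  have L: "holes (lin 0 C) = [0..<length (holes C)]" "is_eterm (lin 0 C)" "wf_trm (arity T) (lin 0 C)"
    "\<And>\<rho>. (\<forall>j<length (holes C). \<rho> j = \<sigma> (holes C ! j)) \<Longrightarrow> subst \<rho> (lin 0 C) = subst \<sigma> C"
    using lin_props(1)[OF C(1), of 0 "arity T"] C(2) by auto
  have ect: "ectx T (length (holes C)) (lin 0 C)"
    unfolding ectx_def using L by auto
  have "plug (lin 0 C) Ms = subst \<sigma> C"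
    unfolding plug_def Ms_def by (rule L(4)) simp
  moreover have "set Ms \<subseteq> \<Gamma>" using C(3) by (auto simp: Ms_def set_holes)
  ultimately show ?thesis
    using cfree.r_id[OF ns ect, of Ms] C(4) by (simp add: Ms_def)
qed

definition avail :: "('n,'f) eqthy \<Rightarrow> ('n,'f) trm set \<Rightarrow> ('n,'f) trm \<Rightarrow> bool" where
  "avail T \<Gamma> D \<longleftrightarrow> idd T \<Gamma> D \<and> (\<forall>A\<in>subterms D. guarded A \<longrightarrow> (\<exists>b\<in>\<Gamma>. \<exists>B\<in>subterms b. acE T A B))"

lemma avail_mono: "\<Gamma> \<subseteq> \<Gamma>' \<Longrightarrow> avail T \<Gamma> D \<Longrightarrow> avail T \<Gamma>' D"
  unfolding avail_def using idd_mono by blast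

lemma avail_ac_mem: "acE T D D' \<Longrightarrow> D' \<in> \<Gamma> \<Longrightarrow> avail T \<Gamma> D"
proof -
  assume ac: "acE T D D'" and m: "D' \<in> \<Gamma>"
  have "idd T \<Gamma> D" using idd_ac[OF ac idd_mem[OF m]] .
  moreover have "\<forall>A\<in>subterms D. guarded A \<longrightarrow> (\<exists>b\<in>\<Gamma>. \<exists>B\<in>subterms b. acE T A B)"
  proof (intro ballI impI)
    fix A assume "A \<in> subterms D" "guarded A"
    then obtain B where "B \<in> subterms D'" "ac_eq (ACs T) A B"
      using ac_subterms[of "ACs T" D D'] ac unfolding acE_def by blast
    then show "\<exists>b\<in>\<Gamma>. \<exists>B\<in>subterms b. acE T A B" using m unfolding acE_def by blast
  qed
  ultimately show ?thesis unfolding avail_def by blast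
qed

lemma nterm_ac: "E_ok T \<Longrightarrow> acE T a b \<Longrightarrow> nterm T a \<Longrightarrow> nterm T b"
proof -
  assume E: "E_ok T" and ac0: "acE T a b" and n: "nterm T a"
  have ac: "ac_eq (ACs T) a b" using ac0 unfolding acE_def .
  have A2: "\<forall>f\<in>ACs T. arity T f = 2" using E unfolding E_ok_def by blast
  have "ground b" using n ac_vars[OF ac] unfolding nterm_def ground_def by simp
  moreover have "wf_trm (arity T) b" using n ac_wf[OF ac A2] unfolding nterm_def by simp
  moreover have "is_nf T b"
    using n nf_ac[OF ac_eq.ac_sym[OF ac]] unfolding nterm_def is_nf_def by blast
  ultimately show ?thesis unfolding nterm_def by blast
qed

lemma cfree_nseq: "cfree T \<Gamma> M \<Longrightarrow> nseq T \<Gamma> M"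
  by (induction rule: cfree.induct) auto

lemma nseq_insert: "nseq T \<Gamma> M \<Longrightarrow> nterm T B \<Longrightarrow> nseq T (insert B \<Gamma>) M"
  unfolding nseq_def by auto

lemma principal:
  assumes E: "E_ok T" and av: "avail T \<Gamma> D" and g: "guarded D" and nD: "nterm T D"
    and ns: "nseq T \<Gamma> M'"
    and step: "\<And>B. acE T D B \<Longrightarrow> nterm T B \<Longrightarrow> cfree T (insert B \<Gamma>) M'"
  shows "cfree T \<Gamma> M'"
proof -
  obtain b B where bB: "b \<in> \<Gamma>" "B \<in> subterms b" "acE T D B"
    using av g subterms_refl unfolding avail_def by metis
  have gB: "guarded B" using bB(3) g ac_guarded unfolding acE_def by metis
  have nB: "nterm T B" using nterm_ac[OF E bB(3) nD] .
  have "idd T \<Gamma> B" using av bB(3) idd_ac unfolding avail_def acE_def by (metis ac_eq.ac_sym)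
  then have cB: "cfree T \<Gamma> B"
    using ns nB by (intro idd_cfree) (auto simp: nseq_def)
  show ?thesis
    using ns gB bB cB step[OF bB(3) nB] by (intro cfree.r_gs[of T \<Gamma> M' B]) auto
qed

lemma acE_sym: "acE T a b \<Longrightarrow> acE T b a" unfolding acE_def by (rule ac_eq.ac_sym)
lemma acE_trans: "acE T a b \<Longrightarrow> acE T b c \<Longrightarrow> acE T a c" unfolding acE_def by (rule ac_eq.ac_trans)
lemma acE_refl: "acE T a a" unfolding acE_def by (rule ac_eq.ac_refl)

lemma nseq_nterm: "nseq T \<Gamma> M \<Longrightarrow> N \<in> \<Gamma> \<Longrightarrow> nterm T N" unfolding nseq_def by auto
lemma nseq_nterm2: "nseq T \<Gamma> M \<Longrightarrow> nterm T M" unfolding nseq_def by auto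

lemma nseq_change: "nseq T \<Gamma> M \<Longrightarrow> nterm T M' \<Longrightarrow> nseq T \<Gamma> M'" unfolding nseq_def by auto

lemma main:
  assumes E: "E_ok T"
  shows "cfree T \<Delta> M \<Longrightarrow> \<forall>\<Gamma> M'. (\<forall>D\<in>\<Delta>. avail T \<Gamma> D) \<longrightarrow> acE T M M' \<longrightarrow> nseq T \<Gamma> M' \<longrightarrow> cfree T \<Gamma> M'"
proof (induction rule: cfree.induct)
  case (r_id \<Gamma>0 M k C Ms)
  show ?case
  proof (intro allI impI)
    fix \<Gamma> M' assume av: "\<forall>D\<in>\<Gamma>0. avail T \<Gamma> D" and ac: "acE T M M'" and ns: "nseq T \<Gamma> M'"
    have "idd T \<Gamma> M"
    proof (rule idd_comp[of C T M "\<lambda>i. Ms ! i"])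
      show "is_eterm C" "wf_trm (arity T) C" using r_id.hyps(2) by (auto simp: ectx_def)
      show "eqE T M (subst (\<lambda>i. Ms ! i) C)" using r_id.hyps(5) by (simp add: plug_def)
      show "\<forall>x\<in>vars C. idd T \<Gamma> (Ms ! x)"
      proof
        fix x assume "x \<in> vars C"
        then have "x < k" using r_id.hyps(2) by (auto simp: ectx_def set_holes[symmetric])
        then have "Ms ! x \<in> \<Gamma>0" using r_id.hyps(3,4) by auto
        then show "idd T \<Gamma> (Ms ! x)" using av by (auto simp: avail_def)
      qed
    qed
    then have "idd T \<Gamma> M'" using idd_ac acE_sym ac by metis
    then show "cfree T \<Gamma> M'" using ns idd_cfree by metis
  qed
next
  case (r_pL M N \<Gamma>0 U)
  show ?case
  proof (intro allI impI)
    fix \<Gamma> U' assume av: "\<forall>D\<in>insert (Pair M N) \<Gamma>0. avail T \<Gamma> D" and ac: "acE T U U'" and ns: "nseq T \<Gamma> U'"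
    have nP: "nterm T (Pair M N)" "nterm T M" "nterm T N"
      using cfree_nseq[OF r_pL.hyps(2)] by (auto simp: nseq_def)
    show "cfree T \<Gamma> U'"
    proof (rule principal[OF E _ _ nP(1) ns])
      show "avail T \<Gamma> (Pair M N)" using av by auto
      show "guarded (Pair M N)" by simp
      fix B assume acB: "acE T (Pair M N) B" and nB: "nterm T B"
      obtain M1 N1 where B: "B = Pair M1 N1" "acE T M M1" "acE T N N1"
        using ac_Pair_D acB unfolding acE_def by metis
      have n1: "nterm T M1" "nterm T N1" using nterm_ac[OF E] B nP by metis+
      have "cfree T (insert (Pair M1 N1) \<Gamma> \<union> {M1, N1}) U'"
      proof (rule r_pL.IH[THEN spec, THEN spec, THEN mp, THEN mp, THEN mp])
        show "\<forall>D\<in>insert (Pair M N) \<Gamma>0 \<union> {M, N}. avail T (insert (Pair M1 N1) \<Gamma> \<union> {M1, N1}) D"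
          using av B by (auto intro: avail_ac_mem elim: avail_mono[rotated])
        show "acE T U U'" by fact
        show "nseq T (insert (Pair M1 N1) \<Gamma> \<union> {M1, N1}) U'"
          using ns n1 nB B by (auto simp: nseq_def)
      qed
      then show "cfree T (insert B \<Gamma>) U'"
        using B nB ns by (auto intro!: cfree.r_pL simp: nseq_def)
    qed
  qed
next
  case (r_pR \<Gamma>0 M N)
  show ?case
  proof (intro allI impI)
    fix \<Gamma> U' assume av: "\<forall>D\<in>\<Gamma>0. avail T \<Gamma> D" and ac: "acE T (Pair M N) U'" and ns: "nseq T \<Gamma> U'"
    obtain M1 N1 where B: "U' = Pair M1 N1" "acE T M M1" "acE T N N1"
      using ac_Pair_D ac unfolding acE_def by metis
    have n1: "nterm T M1" "nterm T N1"
      using nterm_ac[OF E] B cfree_nseq[OF r_pR.hyps(2)] cfree_nseq[OF r_pR.hyps(3)] nseq_nterm2 by metis+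
    show "cfree T \<Gamma> U'"
      using r_pR.IH av B ns n1 by (auto intro!: cfree.r_pR nseq_change)
  qed
next
  case (r_eL M K \<Gamma>0 N)
  show ?case
  proof (intro allI impI)
    fix \<Gamma> U' assume av: "\<forall>D\<in>insert (Enc M K) \<Gamma>0. avail T \<Gamma> D" and ac: "acE T N U'" and ns: "nseq T \<Gamma> U'"
    have nP: "nterm T (Enc M K)" "nterm T M" "nterm T K"
      using cfree_nseq[OF r_eL.hyps(3)] by (auto simp: nseq_def)
    show "cfree T \<Gamma> U'"
    proof (rule principal[OF E _ _ nP(1) ns])
      show "avail T \<Gamma> (Enc M K)" using av by auto
      show "guarded (Enc M K)" by simp
      fix B assume acB: "acE T (Enc M K) B" and nB: "nterm T B"
      obtain M1 K1 where B: "B = Enc M1 K1" "acE T M M1" "acE T K K1"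
        using ac_Enc_D acB unfolding acE_def by metis
      have n1: "nterm T M1" "nterm T K1" using nterm_ac[OF E] B nP by metis+
      have c1: "cfree T (insert (Enc M1 K1) \<Gamma>) K1"
      proof (rule r_eL.IH(1)[THEN spec, THEN spec, THEN mp, THEN mp, THEN mp])
        show "\<forall>D\<in>insert (Enc M K) \<Gamma>0. avail T (insert (Enc M1 K1) \<Gamma>) D"
          using av B by (auto elim: avail_mono[rotated])
        show "acE T K K1" by fact
        show "nseq T (insert (Enc M1 K1) \<Gamma>) K1"
          using ns n1 nB B by (auto simp: nseq_def)
      qed
      have c2: "cfree T (insert (Enc M1 K1) \<Gamma> \<union> {M1, K1}) U'"
      proof (rule r_eL.IH(2)[THEN spec, THEN spec, THEN mp, THEN mp, THEN mp])
        show "\<forall>D\<in>insert (Enc M K) \<Gamma>0 \<union> {M, K}. avail T (insert (Enc M1 K1) \<Gamma> \<union> {M1, K1}) D"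
          using av B by (auto intro: avail_ac_mem elim: avail_mono[rotated])
        show "acE T N U'" by fact
        show "nseq T (insert (Enc M1 K1) \<Gamma> \<union> {M1, K1}) U'"
          using ns n1 nB B by (auto simp: nseq_def)
      qed
      show "cfree T (insert B \<Gamma>) U'"
        using B nB ns c1 c2 by (auto intro!: cfree.r_eL simp: nseq_def)
    qed
  qed
next
  case (r_eR \<Gamma>0 M N)
  show ?case
  proof (intro allI impI)
    fix \<Gamma> U' assume av: "\<forall>D\<in>\<Gamma>0. avail T \<Gamma> D" and ac: "acE T (Enc M N) U'" and ns: "nseq T \<Gamma> U'"
    obtain M1 N1 where B: "U' = Enc M1 N1" "acE T M M1" "acE T N N1"
      using ac_Enc_D ac unfolding acE_def by metis
    have n1: "nterm T M1" "nterm T N1"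
      using nterm_ac[OF E] B cfree_nseq[OF r_eR.hyps(2)] cfree_nseq[OF r_eR.hyps(3)] nseq_nterm2 by metis+
    show "cfree T \<Gamma> U'"
      using r_eR.IH av B ns n1 by (auto intro!: cfree.r_eR nseq_change)
  qed
next
  case (r_signL \<Gamma>0 M K L N)
  show ?case
  proof (intro allI impI)
    fix \<Gamma> U' assume av: "\<forall>D\<in>\<Gamma>0 \<union> {Sign M K, Pub L}. avail T \<Gamma> D" and ac: "acE T N U'" and ns: "nseq T \<Gamma> U'"
    have nP: "nterm T (Sign M K)" "nterm T (Pub L)" "nterm T M"
      using cfree_nseq[OF r_signL.hyps(3)] by (auto simp: nseq_def)
    show "cfree T \<Gamma> U'"
    proof (rule principal[OF E _ _ nP(1) ns])
      show "avail T \<Gamma> (Sign M K)" using av by auto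
      show "guarded (Sign M K)" by simp
      fix B1 assume acB1: "acE T (Sign M K) B1" and nB1: "nterm T B1"
      obtain M1 K1 where B1: "B1 = Sign M1 K1" "acE T M M1" "acE T K K1"
        using ac_Sign_D acB1 unfolding acE_def by metis
      have ns1: "nseq T (insert B1 \<Gamma>) U'" using ns nB1 by (rule nseq_insert)
      show "cfree T (insert B1 \<Gamma>) U'"
      proof (rule principal[OF E _ _ nP(2) ns1])
        show "avail T (insert B1 \<Gamma>) (Pub L)" using av by (auto elim: avail_mono[rotated])
        show "guarded (Pub L)" by simp
        fix B2 assume acB2: "acE T (Pub L) B2" and nB2: "nterm T B2"
        obtain L1 where B2: "B2 = Pub L1" "acE T L L1"
          using ac_Pub_D acB2 unfolding acE_def by metis
        have n1: "nterm T M1" using nterm_ac[OF E] B1 nP by metis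
        have kl: "acE T K1 L1" using B1(3) B2(2) r_signL.hyps(2) by (meson acE_sym acE_trans)
        have c: "cfree T (\<Gamma> \<union> {Sign M1 K1, Pub L1, M1}) U'"
        proof (rule r_signL.IH[THEN spec, THEN spec, THEN mp, THEN mp, THEN mp])
          show "\<forall>D\<in>\<Gamma>0 \<union> {Sign M K, Pub L, M}. avail T (\<Gamma> \<union> {Sign M1 K1, Pub L1, M1}) D"
            using av B1 B2 by (auto intro: avail_ac_mem elim: avail_mono[rotated])
          show "acE T N U'" by fact
          show "nseq T (\<Gamma> \<union> {Sign M1 K1, Pub L1, M1}) U'"
            using ns n1 nB1 nB2 B1 B2 by (auto simp: nseq_def)
        qed
        have "cfree T (\<Gamma> \<union> {Sign M1 K1, Pub L1}) U'"
          using cfree.r_signL[OF _ kl c] ns nB1 nB2 B1 B2 by (auto simp: nseq_def)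
        moreover have "insert B2 (insert B1 \<Gamma>) = \<Gamma> \<union> {Sign M1 K1, Pub L1}" using B1 B2 by auto
        ultimately show "cfree T (insert B2 (insert B1 \<Gamma>)) U'" by simp
      qed
    qed
  qed
next
  case (r_signR \<Gamma>0 M N)
  show ?case
  proof (intro allI impI)
    fix \<Gamma> U' assume av: "\<forall>D\<in>\<Gamma>0. avail T \<Gamma> D" and ac: "acE T (Sign M N) U'" and ns: "nseq T \<Gamma> U'"
    obtain M1 N1 where B: "U' = Sign M1 N1" "acE T M M1" "acE T N N1"
      using ac_Sign_D ac unfolding acE_def by metis
    have n1: "nterm T M1" "nterm T N1"
      using nterm_ac[OF E] B cfree_nseq[OF r_signR.hyps(2)] cfree_nseq[OF r_signR.hyps(3)] nseq_nterm2 by metis+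
    show "cfree T \<Gamma> U'"
      using r_signR.IH av B ns n1 by (auto intro!: cfree.r_signR nseq_change)
  qed
next
  case (r_blindL1 M K \<Gamma>0 N)
  show ?case
  proof (intro allI impI)
    fix \<Gamma> U' assume av: "\<forall>D\<in>insert (Blind M K) \<Gamma>0. avail T \<Gamma> D" and ac: "acE T N U'" and ns: "nseq T \<Gamma> U'"
    have nP: "nterm T (Blind M K)" "nterm T M" "nterm T K"
      using cfree_nseq[OF r_blindL1.hyps(3)] by (auto simp: nseq_def)
    show "cfree T \<Gamma> U'"
    proof (rule principal[OF E _ _ nP(1) ns])
      show "avail T \<Gamma> (Blind M K)" using av by auto
      show "guarded (Blind M K)" by simp
      fix B assume acB: "acE T (Blind M K) B" and nB: "nterm T B"
      obtain M1 K1 where B: "B = Blind M1 K1" "acE T M M1" "acE T K K1"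
        using ac_Blind_D acB unfolding acE_def by metis
      have n1: "nterm T M1" "nterm T K1" using nterm_ac[OF E] B nP by metis+
      have c1: "cfree T (insert (Blind M1 K1) \<Gamma>) K1"
      proof (rule r_blindL1.IH(1)[THEN spec, THEN spec, THEN mp, THEN mp, THEN mp])
        show "\<forall>D\<in>insert (Blind M K) \<Gamma>0. avail T (insert (Blind M1 K1) \<Gamma>) D"
          using av B by (auto elim: avail_mono[rotated])
        show "acE T K K1" by fact
        show "nseq T (insert (Blind M1 K1) \<Gamma>) K1"
          using ns n1 nB B by (auto simp: nseq_def)
      qed
      have c2: "cfree T (insert (Blind M1 K1) \<Gamma> \<union> {M1, K1}) U'"
      proof (rule r_blindL1.IH(2)[THEN spec, THEN spec, THEN mp, THEN mp, THEN mp])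
        show "\<forall>D\<in>insert (Blind M K) \<Gamma>0 \<union> {M, K}. avail T (insert (Blind M1 K1) \<Gamma> \<union> {M1, K1}) D"
          using av B by (auto intro: avail_ac_mem elim: avail_mono[rotated])
        show "acE T N U'" by fact
        show "nseq T (insert (Blind M1 K1) \<Gamma> \<union> {M1, K1}) U'"
          using ns n1 nB B by (auto simp: nseq_def)
      qed
      show "cfree T (insert B \<Gamma>) U'"
        using B nB ns c1 c2 by (auto intro!: cfree.r_blindL1 simp: nseq_def)
    qed
  qed
next
  case (r_blindR \<Gamma>0 M N)
  show ?case
  proof (intro allI impI)
    fix \<Gamma> U' assume av: "\<forall>D\<in>\<Gamma>0. avail T \<Gamma> D" and ac: "acE T (Blind M N) U'" and ns: "nseq T \<Gamma> U'"
    obtain M1 N1 where B: "U' = Blind M1 N1" "acE T M M1" "acE T N N1"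
      using ac_Blind_D ac unfolding acE_def by metis
    have n1: "nterm T M1" "nterm T N1"
      using nterm_ac[OF E] B cfree_nseq[OF r_blindR.hyps(2)] cfree_nseq[OF r_blindR.hyps(3)] nseq_nterm2 by metis+
    show "cfree T \<Gamma> U'"
      using r_blindR.IH av B ns n1 by (auto intro!: cfree.r_blindR nseq_change)
  qed
next
  case (r_blindL2 M R K \<Gamma>0 N)
  show ?case
  proof (intro allI impI)
    fix \<Gamma> U' assume av: "\<forall>D\<in>insert (Sign (Blind M R) K) \<Gamma>0. avail T \<Gamma> D" and ac: "acE T N U'" and ns: "nseq T \<Gamma> U'"
    have nP: "nterm T (Sign (Blind M R) K)" "nterm T (Sign M K)" "nterm T R"
      using cfree_nseq[OF r_blindL2.hyps(3)] by (auto simp: nseq_def)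
    show "cfree T \<Gamma> U'"
    proof (rule principal[OF E _ _ nP(1) ns])
      show "avail T \<Gamma> (Sign (Blind M R) K)" using av by auto
      show "guarded (Sign (Blind M R) K)" by simp
      fix B assume acB: "acE T (Sign (Blind M R) K) B" and nB: "nterm T B"
      obtain X K1 where B0: "B = Sign X K1" "acE T (Blind M R) X" "acE T K K1"
        using ac_Sign_D acB unfolding acE_def by metis
      obtain M1 R1 where B1: "X = Blind M1 R1" "acE T M M1" "acE T R R1"
        using ac_Blind_D B0(2) unfolding acE_def by metis
      have acS: "acE T (Sign M K) (Sign M1 K1)"
        using B0(3) B1(2) unfolding acE_def by (meson ac_eq.ac_Sign1 ac_eq.ac_Sign2 ac_eq.ac_trans)
      have n1: "nterm T (Sign M1 K1)" "nterm T R1" using nterm_ac[OF E] B1 acS nP by metis+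
      have c1: "cfree T (insert B \<Gamma>) R1"
      proof (rule r_blindL2.IH(1)[THEN spec, THEN spec, THEN mp, THEN mp, THEN mp])
        show "\<forall>D\<in>insert (Sign (Blind M R) K) \<Gamma>0. avail T (insert B \<Gamma>) D"
          using av by (auto elim: avail_mono[rotated])
        show "acE T R R1" by fact
        show "nseq T (insert B \<Gamma>) R1"
          using ns n1 nB by (auto simp: nseq_def)
      qed
      have c2: "cfree T (insert B \<Gamma> \<union> {Sign M1 K1, R1}) U'"
      proof (rule r_blindL2.IH(2)[THEN spec, THEN spec, THEN mp, THEN mp, THEN mp])
        show "\<forall>D\<in>insert (Sign (Blind M R) K) \<Gamma>0 \<union> {Sign M K, R}. avail T (insert B \<Gamma> \<union> {Sign M1 K1, R1}) D"
          using av acS B1 by (auto intro: avail_ac_mem elim: avail_mono[rotated])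
        show "acE T N U'" by fact
        show "nseq T (insert B \<Gamma> \<union> {Sign M1 K1, R1}) U'"
          using ns n1 nB by (auto simp: nseq_def)
      qed
      show "cfree T (insert B \<Gamma>) U'"
        using B0 B1 nB ns c1 c2 by (auto intro!: cfree.r_blindL2 simp: nseq_def)
    qed
  qed
next
  case (r_gs \<Gamma>0 M A)
  show ?case
  proof (intro allI impI)
    fix \<Gamma> U' assume av: "\<forall>D\<in>\<Gamma>0. avail T \<Gamma> D" and ac: "acE T M U'" and ns: "nseq T \<Gamma> U'"
    have nA: "nterm T A" using cfree_nseq[OF r_gs.hyps(4)] nseq_nterm2 by metis
    obtain A' where A': "A' \<in> (\<Union>N\<in>insert U' \<Gamma>. subterms N)" "acE T A A'"
    proof -
      from r_gs.hyps(3) consider "A \<in> subterms M" | D where "D \<in> \<Gamma>0" "A \<in> subterms D" by auto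
      then show thesis
      proof cases
        case 1
        then obtain B where "B \<in> subterms U'" "acE T A B"
          using ac_subterms[of "ACs T" M U'] ac r_gs.hyps(2) unfolding acE_def by blast
        then show thesis using that by blast
      next
        case 2
        then obtain b B where "b \<in> \<Gamma>" "B \<in> subterms b" "acE T A B"
          using av r_gs.hyps(2) unfolding avail_def by blast
        then show thesis using that by blast
      qed
    qed
    have gA': "guarded A'" using A'(2) r_gs.hyps(2) ac_guarded unfolding acE_def by metis
    have nA': "nterm T A'" using nterm_ac[OF E A'(2) nA] .
    have c1: "cfree T \<Gamma> A'"
      using r_gs.IH(1) av A'(2) ns nA' by (auto intro: nseq_change)
    have c2: "cfree T (insert A' \<Gamma>) U'"
    proof (rule r_gs.IH(2)[THEN spec, THEN spec, THEN mp, THEN mp, THEN mp])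
      show "\<forall>D\<in>insert A \<Gamma>0. avail T (insert A' \<Gamma>) D"
        using av A'(2) by (auto intro: avail_ac_mem elim: avail_mono[rotated])
      show "acE T M U'" by fact
      show "nseq T (insert A' \<Gamma>) U'" using ns nA' by (rule nseq_insert)
    qed
    show "cfree T \<Gamma> U'"
      using cfree.r_gs[OF ns gA' A'(1) c1 c2] .
  qed
qed

theorem lemma4:
  fixes T :: "('n, 'f) eqthy"
  assumes "E_ok T"
    and "length Ms = k"
    and "\<forall>Mi \<in> set Ms. nterm T Mi"
    and "ectx T k C"
    and "is_nf_of T (plug C Ms) N"
    and "cfree T (insert N \<Gamma>) M"
  shows "cfree T (\<Gamma> \<union> set Ms) M"
proof -
  note E = assms(1)
  have C: "is_eterm C" "wf_trm (arity T) C" "holes C = [0..<k]" using assms(4) by (auto simp: ectx_def)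
  have vC: "vars C = {0..<k}" using C(3) set_holes by (metis set_upt)
  have ns0: "nseq T (insert N \<Gamma>) M" using cfree_nseq[OF assms(6)] .
  have ns: "nseq T (\<Gamma> \<union> set Ms) M" using ns0 assms(3) by (auto simp: nseq_def)
  have steps: "(rstep_ac (ACs T) (rules T))\<^sup>*\<^sup>* (plug C Ms) N" and nfN: "is_nf T N"
    using assms(5) by (auto simp: is_nf_of_def)
  have avN: "avail T (\<Gamma> \<union> set Ms) N"
    unfolding avail_def
  proof
    show "idd T (\<Gamma> \<union> set Ms) N"
    proof (rule idd_comp[of C T N "\<lambda>i. Ms ! i"])
      show "is_eterm C" "wf_trm (arity T) C" using C by auto
      show "eqE T N (subst (\<lambda>i. Ms ! i) C)"
        using conv_ac_sym[OF conv_ac_rsteps[OF steps]] by (simp add: eqE_def plug_def)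
      show "\<forall>x\<in>vars C. idd T (\<Gamma> \<union> set Ms) (Ms ! x)"
        using vC assms(2) by (auto intro: idd_mem)
    qed
  next
    let ?G = "\<Union>Mi\<in>set Ms. aliens Mi"
    have rules: "\<forall>(l, r)\<in>rules T. is_eterm l \<and> is_eterm r \<and> vars r \<subseteq> vars l"
      using E unfolding E_ok_def by fast
    have Gnf: "\<forall>b\<in>?G. \<not> (\<exists>u. rstep_ac (ACs T) (rules T) b u)"
    proof
      fix b assume "b \<in> ?G"
      then obtain Mi where "Mi \<in> set Ms" "b \<in> aliens Mi" by blast
      moreover have "is_nf T Mi" using assms(3) \<open>Mi \<in> set Ms\<close> by (auto simp: nterm_def)
      ultimately show "\<not> (\<exists>u. rstep_ac (ACs T) (rules T) b u)"
        using alien_nf unfolding is_nf_def by metis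
    qed
    have init: "\<forall>a\<in>aliens (plug C Ms). \<exists>b\<in>?G. ac_eq (ACs T) a b"
    proof
      fix a assume "a \<in> aliens (plug C Ms)"
      then obtain x where x: "x < k" "a \<in> aliens (Ms ! x)"
        unfolding plug_def using aliens_subst_eterm[OF C(1)] vC by auto
      then have "Ms ! x \<in> set Ms" using assms(2) by auto
      then have "a \<in> ?G" using x(2) by blast
      then show "\<exists>b\<in>?G. ac_eq (ACs T) a b" using ac_eq.ac_refl by blast
    qed
    have inv: "\<forall>a\<in>aliens N. \<exists>b\<in>?G. ac_eq (ACs T) a b"
      using alien_invariant[OF rules Gnf steps init] .
    show "\<forall>A\<in>subterms N. guarded A \<longrightarrow> (\<exists>b\<in>\<Gamma> \<union> set Ms. \<exists>B\<in>subterms b. acE T A B)"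
    proof (intro ballI impI)
      fix A assume A: "A \<in> subterms N" "guarded A"
      then obtain a where a: "a \<in> aliens N" "A \<in> subterms a" using guarded_sub_alien by blast
      then obtain b Mi where b: "Mi \<in> set Ms" "b \<in> aliens Mi" "ac_eq (ACs T) a b" using inv by blast
      then obtain B where B: "B \<in> subterms b" "ac_eq (ACs T) A B"
        using ac_subterms[OF b(3)] a(2) A(2) by blast
      have "B \<in> subterms Mi" using B(1) aliens_subterms[OF b(2)] subterms_trans by blast
      then show "\<exists>b\<in>\<Gamma> \<union> set Ms. \<exists>B\<in>subterms b. acE T A B"
        using b(1) B(2) unfolding acE_def by blast
    qed
  qed
  have av: "\<forall>D\<in>insert N \<Gamma>. avail T (\<Gamma> \<union> set Ms) D"
    using avN by (auto intro: avail_ac_mem acE_refl)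
  show ?thesis
    using main[OF E assms(6), THEN spec, THEN spec, THEN mp, THEN mp, THEN mp, OF av acE_refl ns] .
qed

end
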